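(* Let $X$ be a Tychonoff space and $\mathcal{P}$ an ideal of closed subsets of $X$. If $X$ is a $P$-space (every $G_\delta$-subset of $X$ is open), then $C(X)_\mathcal{P}$ is a regular ring, i.e. for every $f\in C(X)_\mathcal{P}$ there is $g\in C(X)_\mathcal{P}$ with $f=f^2g$.
   Context: An ideal of closed subsets of $X$ is a family $\mathcal{P}$ of closed subsets closed under finite unions and under passing to closed subsets. $D_f$ is the set of discontinuity points of $f\in\mathbb{R}^X$; $C(X)_\mathcal{P}=\{f\in\mathbb{R}^X\colon\overline{D_f}\in\mathcal{P}\}$ with pointwise operations. (A space with $C(X)_\mathcal{P}$ regular is called a $\mathcal{P}P$-space.) *)

theory Defs
  imports "HOL-Analysis.Analysis"
begin

definition tychonoff_space :: "'a topology \<Rightarrow> bool" where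
  "tychonoff_space X \<longleftrightarrow> completely_regular_space X \<and> Hausdorff_space X"

definition P_space :: "'a topology \<Rightarrow> bool" where
  "P_space X \<longleftrightarrow> (\<forall>S. gdelta_in X S \<longrightarrow> openin X S)"

definition closed_ideal :: "'a topology \<Rightarrow> 'a set set \<Rightarrow> bool" where
  "closed_ideal X \<P> \<longleftrightarrow>
     (\<forall>A\<in>\<P>. closedin X A) \<and>
     (\<forall>A\<in>\<P>. \<forall>B\<in>\<P>. A \<union> B \<in> \<P>) \<and>
     (\<forall>A\<in>\<P>. \<forall>B. closedin X B \<and> B \<subseteq> A \<longrightarrow> B \<in> \<P>)"

definition continuous_at_pt :: "'a topology \<Rightarrow> ('a \<Rightarrow> real) \<Rightarrow> 'a \<Rightarrow> bool" where
  "continuous_at_pt X f x \<longleftrightarrow>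
     (\<forall>V. open V \<and> f x \<in> V \<longrightarrow> (\<exists>U. openin X U \<and> x \<in> U \<and> f ` U \<subseteq> V))"

definition discont_set :: "'a topology \<Rightarrow> ('a \<Rightarrow> real) \<Rightarrow> 'a set" where
  "discont_set X f = {x \<in> topspace X. \<not> continuous_at_pt X f x}"

definition C_P :: "'a topology \<Rightarrow> 'a set set \<Rightarrow> ('a \<Rightarrow> real) set" where
  "C_P X \<P> = {f. X closure_of (discont_set X f) \<in> \<P>}"

end

theory Submission
  imports Defs
begin

lemma cont_comp:
  assumes "continuous_at_pt X f x" "isCont h (f x)"
  shows "continuous_at_pt X (\<lambda>y. h (f y)) x"
  unfolding continuous_at_pt_def
proof (intro allI impI)
  fix V assume V: "open V \<and> h (f x) \<in> V"
  then obtain S where S: "open S" "f x \<in> S" "\<forall>t\<in>S. h t \<in> V"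
    using assms(2) unfolding continuous_at_open by blast
  then obtain U where U: "openin X U" "x \<in> U" "f ` U \<subseteq> S"
    using assms(1) unfolding continuous_at_pt_def by blast
  have "(\<lambda>y. h (f y)) ` U \<subseteq> V"
  proof
    fix z assume "z \<in> (\<lambda>y. h (f y)) ` U"
    then obtain y where y: "y \<in> U" "z = h (f y)" by blast
    then have "f y \<in> S" using U(3) by blast
    then show "z \<in> V" using S(3) y(2) by blast
  qed
  then show "\<exists>U. openin X U \<and> x \<in> U \<and> (\<lambda>y. h (f y)) ` U \<subseteq> V"
    using U by blast
qed

lemma key:
  assumes P: "P_space X"
    and x: "x \<in> topspace X" "x \<notin> X closure_of (discont_set X f)"
  shows "continuous_at_pt X (\<lambda>y. inverse (f y)) x"
proof -
  define W where "W = topspace X - X closure_of (discont_set X f)"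
  have Wo: "openin X W" unfolding W_def by (intro openin_diff openin_topspace closedin_closure_of)
  have xW: "x \<in> W" using x W_def by blast
  have cW: "continuous_at_pt X f y" if "y \<in> W" for y
  proof -
    have "discont_set X f \<subseteq> X closure_of (discont_set X f)"
      by (rule closure_of_subset) (auto simp: discont_set_def)
    then show ?thesis using that unfolding W_def discont_set_def by blast
  qed
  show ?thesis
  proof (cases "f x = 0")
    case False
    have "isCont inverse (f x)" using False by (intro continuous_intros) auto
    then show ?thesis using cont_comp[OF cW[OF xW]] by simp
  next
    case True
    define Z where "Z n = {y \<in> W. \<bar>f y\<bar> < inverse (real (Suc n))}" for n
    have Zo: "openin X (Z n)" for n
    proof (subst openin_subopen, intro ballI)
      fix y assume y: "y \<in> Z n"
      have "open {t::real. \<bar>t\<bar> < inverse (real (Suc n))}"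
        by (intro open_Collect_less continuous_intros)
      moreover have "f y \<in> {t::real. \<bar>t\<bar> < inverse (real (Suc n))}" using y Z_def by auto
      ultimately obtain U where U: "openin X U" "y \<in> U" "f ` U \<subseteq> {t::real. \<bar>t\<bar> < inverse (real (Suc n))}"
        using cW[of y] y Z_def unfolding continuous_at_pt_def by blast
      have "U \<inter> W \<subseteq> Z n"
      proof
        fix z assume z: "z \<in> U \<inter> W"
        then have "f z \<in> {t::real. \<bar>t\<bar> < inverse (real (Suc n))}" using U(3) by blast
        then show "z \<in> Z n" using z unfolding Z_def by simp
      qed
      moreover have "y \<in> W" using y unfolding Z_def by simp
      ultimately show "\<exists>T. openin X T \<and> y \<in> T \<and> T \<subseteq> Z n"
        using U Wo by (intro exI[of _ "U \<inter> W"]) blast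
    qed
    have Zeq: "{y \<in> W. f y = 0} = \<Inter> (range Z)"
    proof
      show "{y \<in> W. f y = 0} \<subseteq> \<Inter> (range Z)" by (auto simp: Z_def)
    next
      show "\<Inter> (range Z) \<subseteq> {y \<in> W. f y = 0}"
      proof
        fix y assume y: "y \<in> \<Inter> (range Z)"
        have "f y = 0"
        proof (rule ccontr)
          assume "f y \<noteq> 0"
          then obtain n where "inverse (real (Suc n)) < \<bar>f y\<bar>"
            using reals_Archimedean[of "\<bar>f y\<bar>"] \<open>f y \<noteq> 0\<close> by auto
          moreover have "y \<in> Z n" using y by blast
          ultimately show False by (simp add: Z_def)
        qed
        then show "y \<in> {y \<in> W. f y = 0}" using y Z_def by auto
      qed
    qed
    have "gdelta_in X (\<Inter> (range Z))"
      by (rule gdelta_in_Inter) (auto intro: open_imp_gdelta_in Zo)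
    then have Oo: "openin X {y \<in> W. f y = 0}" using P unfolding P_space_def Zeq by blast
    show ?thesis unfolding continuous_at_pt_def
    proof (intro allI impI)
      fix V assume "open V \<and> inverse (f x) \<in> V"
      then have "(\<lambda>y. inverse (f y)) ` {y \<in> W. f y = 0} \<subseteq> V" using True by auto
      moreover have "x \<in> {y \<in> W. f y = 0}" using xW True by simp
      ultimately show "\<exists>U. openin X U \<and> x \<in> U \<and> (\<lambda>y. inverse (f y)) ` U \<subseteq> V"
        using Oo by blast
    qed
  qed
qed

theorem mainTheorem13:
  fixes X :: "'a topology" and \<P> :: "'a set set"
  assumes "tychonoff_space X" and "closed_ideal X \<P>" and "P_space X"
  shows "\<forall>f\<in>C_P X \<P>. \<exists>g\<in>C_P X \<P>. \<forall>x\<in>topspace X. f x = (f x)\<^sup>2 * g x"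
proof
  fix f assume f: "f \<in> C_P X \<P>"
  define g where "g = (\<lambda>y. inverse (f y))"
  have sub: "discont_set X g \<subseteq> X closure_of (discont_set X f)"
  proof
    fix x assume "x \<in> discont_set X g"
    then have "x \<in> topspace X" "\<not> continuous_at_pt X g x" unfolding discont_set_def by auto
    then show "x \<in> X closure_of (discont_set X f)"
      using key[OF assms(3), of x f] unfolding g_def by blast
  qed
  have "X closure_of (discont_set X g) \<subseteq> X closure_of (discont_set X f)"
    using closure_of_minimal[OF sub] by simp
  moreover have "X closure_of (discont_set X f) \<in> \<P>" using f unfolding C_P_def by simp
  moreover have "closedin X (X closure_of (discont_set X g))" by simp
  ultimately have "g \<in> C_P X \<P>"
    using assms(2) unfolding C_P_def closed_ideal_def by blast
  moreover have "\<forall>x\<in>topspace X. f x = (f x)\<^sup>2 * g x"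
    unfolding g_def
  proof
    fix x show "f x = (f x)\<^sup>2 * inverse (f x)"
      by (cases "f x = 0") (auto simp: power2_eq_square field_simps)
  qed
  ultimately show "\<exists>g\<in>C_P X \<P>. \<forall>x\<in>topspace X. f x = (f x)\<^sup>2 * g x" by blast
qed

end
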